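(* For every $\widehat r\in\mathbb{N}$ and every $m\ge1$, \[\mathrm{Var}(\mu^{(b^m\widehat r+1)})=\Big(1-\frac1{b^m}\Big)\mathrm{Var}(\mu^{(\widehat r)})+\frac1{b^m}\mathrm{Var}(\mu^{(\widehat r+1)})+b-\frac1{b^{m-1}}.\]
   Context: Fix an integer $b\ge2$. For $n\in\mathbb{N}$ with base-$b$ digits $n_k$, $s(n):=\sum_kn_k$. For $r,n\in\mathbb{N}$, $\Delta^{(r)}(n):=s(n+r)-s(n)$, and $\mu^{(r)}(d):=\lim_{N\to\infty}\frac1N|\{n<N:\Delta^{(r)}(n)=d\}|$ for $d\in\mathbb{Z}$; these limits exist and $\mu^{(r)}$ is a probability measure on $\mathbb{Z}$ with finite moments. $\mathrm{Var}(\mu^{(r)})$ is its variance. *)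

theory Defs
  imports "HOL-Analysis.Analysis"
begin

text \<open>Sum of base-b digits of n: the k-th digit is (n div b^k) mod b; for b \<ge> 2
  all digits with index k > n vanish, so summing over k \<le> n suffices.\<close>
definition digit_sum :: "nat \<Rightarrow> nat \<Rightarrow> nat" where
  "digit_sum b n = (\<Sum>k\<le>n. (n div b ^ k) mod b)"

definition Delta :: "nat \<Rightarrow> nat \<Rightarrow> nat \<Rightarrow> int" where
  "Delta b r n = int (digit_sum b (n + r)) - int (digit_sum b n)"

definition mu :: "nat \<Rightarrow> nat \<Rightarrow> int \<Rightarrow> real" where
  "mu b r d = lim (\<lambda>N. real (card {n. n < N \<and> Delta b r n = d}) / real N)"

definition Var_mu :: "nat \<Rightarrow> nat \<Rightarrow> real" where
  "Var_mu b r = (\<Sum>\<^sub>\<infinity>d\<in>(UNIV::int set). mu b r d * (real_of_int d)^2)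
              - (\<Sum>\<^sub>\<infinity>d\<in>(UNIV::int set). mu b r d * real_of_int d)^2"

end

theory Submission imports Defs begin

definition dens :: "nat set \<Rightarrow> real \<Rightarrow> bool" where
  "dens A \<delta> \<longleftrightarrow> (\<lambda>N. real (card {n. n < N \<and> n \<in> A}) / real N) \<longlonglongrightarrow> \<delta>"

lemma tendsto_by_bound:
  fixes f :: "nat \<Rightarrow> real"
  assumes "\<And>N. N \<ge> 1 \<Longrightarrow> \<bar>f N - l\<bar> \<le> C / real N"
  shows "f \<longlonglongrightarrow> l"
proof -
  have "(\<lambda>N. C / real N) \<longlonglongrightarrow> 0" by (rule lim_const_over_n)
  moreover have "eventually (\<lambda>N. norm (f N - l) \<le> C / real N) sequentially"
    using assms unfolding eventually_sequentially by (auto intro!: exI[of _ 1])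
  ultimately have "(\<lambda>N. f N - l) \<longlonglongrightarrow> 0"
    using Lim_null_comparison[of "\<lambda>N. f N - l" "\<lambda>N. C / real N" sequentially] by simp
  then show ?thesis by (simp add: LIM_zero_cancel)
qed

lemma dens_UN:
  assumes "finite T" "disjoint_family_on A T" "\<And>t. t \<in> T \<Longrightarrow> dens (A t) (\<delta> t)"
  shows "dens (\<Union>t\<in>T. A t) (\<Sum>t\<in>T. \<delta> t)"
proof -
  have c: "card {n. n < N \<and> n \<in> (\<Union>t\<in>T. A t)} = (\<Sum>t\<in>T. card {n. n < N \<and> n \<in> A t})" for N
  proof -
    have "{n. n < N \<and> n \<in> (\<Union>t\<in>T. A t)} = (\<Union>t\<in>T. {n. n < N \<and> n \<in> A t})" by auto
    also have "card \<dots> = (\<Sum>t\<in>T. card {n. n < N \<and> n \<in> A t})"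
      by (rule card_UN_disjoint) (use assms in \<open>auto simp: disjoint_family_on_def\<close>)
    finally show ?thesis .
  qed
  have eq: "(\<lambda>N. real (card {n. n < N \<and> n \<in> (\<Union>t\<in>T. A t)}) / real N)
      = (\<lambda>N. \<Sum>t\<in>T. real (card {n. n < N \<and> n \<in> A t}) / real N)"
    by (rule ext) (simp only: c of_nat_sum sum_divide_distrib)
  show ?thesis unfolding dens_def eq
    by (rule tendsto_sum) (use assms in \<open>auto simp: dens_def\<close>)
qed

lemma dens_image:
  assumes d: "dens A \<delta>" and tk: "t < k"
  shows "dens ((\<lambda>q. k*q+t) ` A) (\<delta> / real k)"
proof -
  have k0: "k > 0" using tk by simp
  define M where "M N = (N + (k - 1 - t)) div k" for N
  have iff: "k*q+t < N \<longleftrightarrow> q < M N" for q N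
  proof -
    have "q < M N \<longleftrightarrow> Suc q \<le> (N + (k - 1 - t)) div k" unfolding M_def by (simp only: Suc_le_eq)
    also have "\<dots> \<longleftrightarrow> Suc q * k \<le> N + (k - 1 - t)" using k0 by (rule less_eq_div_iff_mult_less_eq)
    also have "\<dots> \<longleftrightarrow> k*q+t < N" using tk by (auto simp: algebra_simps)
    finally show ?thesis by simp
  qed
  define c where "c m = card {q. q < m \<and> q \<in> A}" for m
  have cnt: "card {n. n < N \<and> n \<in> (\<lambda>q. k*q+t) ` A} = c (M N)" for N
  proof -
    have "{n. n < N \<and> n \<in> (\<lambda>q. k*q+t) ` A} = (\<lambda>q. k*q+t) ` {q. q < M N \<and> q \<in> A}"
      using iff by auto
    moreover have "inj_on (\<lambda>q. k*q+t) {q. q < M N \<and> q \<in> A}" using k0 by (auto simp: inj_on_def)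
    ultimately show ?thesis unfolding c_def by (simp add: card_image)
  qed
  have Mtop: "filterlim M at_top sequentially"
    unfolding filterlim_at_top eventually_sequentially
  proof (intro allI exI allI impI)
    fix Z N assume "Z * k \<le> N"
    then have "Z * k \<le> N + (k - 1 - t)" by simp
    then show "Z \<le> M N" unfolding M_def using k0 by (simp add: less_eq_div_iff_mult_less_eq)
  qed
  have g: "(\<lambda>m. real (c m) / real m) \<longlonglongrightarrow> \<delta>" using d unfolding dens_def c_def .
  have g2: "(\<lambda>N. real (c (M N)) / real (M N)) \<longlonglongrightarrow> \<delta>"
    using filterlim_compose[OF g Mtop] by (simp add: o_def)
  have r: "(\<lambda>N. real (M N) / real N) \<longlonglongrightarrow> 1 / real k"
  proof (rule tendsto_by_bound[where C=1])
    fix N :: nat assume N: "N \<ge> 1"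
    have a1: "M N * k \<le> N + (k - 1 - t)" using less_eq_div_iff_mult_less_eq[OF k0, of "M N" "N + (k-1-t)"] unfolding M_def by simp
    have a2: "N + (k - 1 - t) < (M N + 1) * k" unfolding M_def using k0
      by (metis div_mult_mod_eq mod_less_divisor add_mult_distrib2 mult.commute mult_1_right nat_add_left_cancel_less)
    have "N < (M N + 1) * k" using a2 by linarith
    then have b1: "real N \<le> real (M N) * real k + real k"
      by (metis (mono_tags) of_nat_add of_nat_less_iff of_nat_mult add_mult_distrib mult_1 less_imp_le)
    have b2: "real (M N) * real k \<le> real N + real k"
      using a1 by (metis (mono_tags) of_nat_add of_nat_le_iff of_nat_mult le_diff_conv le_trans diff_le_self add_le_mono order_refl)
    have kp: "real k > 0" using k0 by simp
    have Np: "real N > 0" using N by simp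
    have "\<bar>real (M N) / real N - 1 / real k\<bar> = \<bar>real (M N) * real k - real N\<bar> / (real k * real N)"
      using kp Np by (simp add: field_simps)
    also have "\<dots> \<le> real k / (real k * real N)"
      using b1 b2 kp Np by (intro divide_right_mono) auto
    also have "\<dots> = 1 / real N" using kp by simp
    finally show "\<bar>real (M N) / real N - 1 / real k\<bar> \<le> 1 / real N" .
  qed
  have eq: "real (c (M N)) / real N = real (c (M N)) / real (M N) * (real (M N) / real N)" for N
  proof (cases "M N = 0")
    case True then show ?thesis by (simp add: c_def)
  next
    case False then show ?thesis by simp
  qed
  have "(\<lambda>N. real (c (M N)) / real N) \<longlonglongrightarrow> \<delta> * (1 / real k)"
    unfolding eq by (intro tendsto_mult g2 r)
  then show ?thesis unfolding dens_def cnt by simp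
qed


lemma ds_trunc:
  assumes b: "b \<ge> 2" and K: "n < b ^ K"
  shows "digit_sum b n = (\<Sum>k<K. n div b^k mod b)"
proof -
  have z: "n div b^k mod b = 0" if "k > n \<or> k \<ge> K" for k
  proof -
    have "n < b ^ k"
    proof (cases "k > n")
      case True
      have "n < 2 ^ n" by (rule less_exp)
      also have "\<dots> \<le> 2 ^ k" using True by (intro power_increasing) auto
      also have "\<dots> \<le> b ^ k" using b by (intro power_mono) auto
      finally show ?thesis .
    next
      case False
      with that have "K \<le> k" by auto
      have "b ^ K \<le> b ^ k" using b \<open>K \<le> k\<close> by (intro power_increasing) auto
      with K show ?thesis by simp
    qed
    then show ?thesis by simp
  qed
  have "digit_sum b n = (\<Sum>k<n + 1 + K. n div b^k mod b)"
    unfolding digit_sum_def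
    by (rule sum.mono_neutral_left) (use z in auto)
  also have "\<dots> = (\<Sum>k<K. n div b^k mod b)"
    by (rule sum.mono_neutral_right) (use z in auto)
  finally show ?thesis .
qed

lemma ds_rec:
  assumes b: "b \<ge> 2"
  shows "digit_sum b n = n mod b + digit_sum b (n div b)"
proof -
  have n1: "n < b ^ (Suc n)"
  proof -
    have "n < 2 ^ n" by (rule less_exp)
    also have "\<dots> \<le> 2 ^ Suc n" by simp
    also have "\<dots> \<le> b ^ Suc n" using b by (intro power_mono) auto
    finally show ?thesis .
  qed
  have n2: "n div b < b ^ n"
  proof -
    have "n div b < Suc n" by (meson div_le_dividend le_imp_less_Suc)
    have "b * (n div b) \<le> n" by simp
    have "n < b * b ^ n" using n1 by simp
    then show ?thesis using \<open>b * (n div b) \<le> n\<close> by (metis le_less_trans mult_less_cancel1)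
  qed
  have "digit_sum b n = (\<Sum>k<Suc n. n div b^k mod b)" by (rule ds_trunc[OF b n1])
  also have "\<dots> = n mod b + (\<Sum>k<n. n div b^(Suc k) mod b)"
    by (subst sum.lessThan_Suc_shift) simp
  also have "(\<Sum>k<n. n div b^(Suc k) mod b) = (\<Sum>k<n. (n div b) div b^k mod b)"
    by (simp add: div_mult2_eq)
  also have "\<dots> = digit_sum b (n div b)" by (rule ds_trunc[OF b n2, symmetric])
  finally show ?thesis .
qed

lemma ds_lin:
  assumes b: "b \<ge> 2" and t: "t < b"
  shows "digit_sum b (b*q+t) = digit_sum b q + t"
  using ds_rec[OF b, of "b*q+t"] t b by simp

lemma Delta_step:
  assumes b: "b \<ge> 2" and t: "t < b" and a: "a < b"
  shows "Delta b (b*r+a) (b*q+t) = (if t + a < b then Delta b r q + int a else Delta b (r+1) q + int a - int b)"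
proof (cases "t + a < b")
  case True
  have e: "b*q+t + (b*r+a) = b*(q+r) + (t+a)" by (simp add: algebra_simps)
  show ?thesis using True ds_lin[OF b t, of q] ds_lin[OF b True, of "q+r"] unfolding Delta_def e by simp
next
  case False
  have e: "b*q+t + (b*r+a) = b*(q+(r+1)) + (t+a-b)" using False by (simp add: algebra_simps)
  have tl: "t + a - b < b" using t a by simp
  show ?thesis using False ds_lin[OF b t, of q] ds_lin[OF b tl, of "q+(r+1)"] False
    unfolding Delta_def e by simp
qed

lemma set_decomp:
  assumes b: "b \<ge> 2" and a: "a < b"
  shows "{n. Delta b (b*r+a) n = d} = (\<Union>t\<in>{..<b}. (\<lambda>q. b*q+t) `
     (if t+a<b then {q. Delta b r q = d - int a} else {q. Delta b (r+1) q = d - int a + int b}))"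
    (is "?L = ?R")
proof
  show "?L \<subseteq> ?R"
  proof
    fix n assume "n \<in> ?L"
    define q t where "q = n div b" and "t = n mod b"
    have n: "n = b*q+t" unfolding q_def t_def by simp
    have t: "t < b" unfolding t_def using b by simp
    have "Delta b (b*r+a) (b*q+t) = d" using \<open>n \<in> ?L\<close> n by simp
    then have "q \<in> (if t+a<b then {q. Delta b r q = d - int a} else {q. Delta b (r+1) q = d - int a + int b})"
      using Delta_step[OF b t a, of r q] by (auto split: if_splits)
    then show "n \<in> ?R" using n t by blast
  qed
next
  show "?R \<subseteq> ?L"
  proof
    fix n assume "n \<in> ?R"
    then obtain t q where t: "t < b" and n: "n = b*q+t"
      and q: "q \<in> (if t+a<b then {q. Delta b r q = d - int a} else {q. Delta b (r+1) q = d - int a + int b})"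
      by blast
    show "n \<in> ?L"
    proof (cases "t+a<b")
      case True
      then show ?thesis using q Delta_step[OF b t a, of r q] n by simp
    next
      case False
      then show ?thesis using q Delta_step[OF b t a, of r q] n by simp
    qed
  qed
qed

lemma dens_step:
  assumes b: "b \<ge> 2" and a: "a < b"
    and X: "dens {q. Delta b r q = d - int a} X"
    and Y: "a > 0 \<Longrightarrow> dens {q. Delta b (r+1) q = d - int a + int b} Y"
  shows "dens {n. Delta b (b*r+a) n = d} (((real b - real a) * X + real a * Y) / real b)"
proof -
  define S where "S t = (if t+a<b then {q. Delta b r q = d - int a} else {q. Delta b (r+1) q = d - int a + int b})" for t
  define \<delta> where "\<delta> t = (if t+a<b then X else Y) / real b" for t
  have "dens (\<Union>t\<in>{..<b}. (\<lambda>q. b*q+t) ` S t) (\<Sum>t\<in>{..<b}. \<delta> t)"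
  proof (rule dens_UN)
    show "disjoint_family_on (\<lambda>t. (\<lambda>q. b*q+t) ` S t) {..<b}"
      unfolding disjoint_family_on_def
    proof (intro ballI impI)
      fix s t assume "s \<in> {..<b}" "t \<in> {..<b}" "s \<noteq> t"
      show "(\<lambda>q. b*q+s) ` S s \<inter> (\<lambda>q. b*q+t) ` S t = {}"
      proof (rule ccontr)
        assume "(\<lambda>q. b*q+s) ` S s \<inter> (\<lambda>q. b*q+t) ` S t \<noteq> {}"
        then obtain q1 q2 where e: "b*q1+s = b*q2+t" by blast
        have "(b*q1+s) mod b = s" using \<open>s \<in> {..<b}\<close> by simp
        moreover have "(b*q2+t) mod b = t" using \<open>t \<in> {..<b}\<close> by simp
        ultimately show False using e \<open>s \<noteq> t\<close> by simp
      qed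
    qed
    fix t assume t: "t \<in> {..<b}"
    show "dens ((\<lambda>q. b*q+t) ` S t) (\<delta> t)"
    proof (cases "t+a<b")
      case True
      then show ?thesis unfolding S_def \<delta>_def using dens_image[OF X, of t b] t by simp
    next
      case False
      then have "a > 0" using t by simp
      then show ?thesis unfolding S_def \<delta>_def using dens_image[OF Y, of t b] t False by simp
    qed
  qed simp
  moreover have "(\<Sum>t\<in>{..<b}. \<delta> t) = ((real b - real a) * X + real a * Y) / real b"
  proof -
    have "(\<Sum>t\<in>{..<b}. \<delta> t) = (\<Sum>t\<in>{..<b-a}. X / real b) + (\<Sum>t\<in>{b-a..<b}. Y / real b)"
    proof -
      have u: "{..<b} = {..<b-a} \<union> {b-a..<b}" using a by auto
      have "(\<Sum>t\<in>{..<b}. \<delta> t) = (\<Sum>t\<in>{..<b-a}. \<delta> t) + (\<Sum>t\<in>{b-a..<b}. \<delta> t)"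
        unfolding u by (rule sum.union_disjoint) auto
      also have "(\<Sum>t\<in>{..<b-a}. \<delta> t) = (\<Sum>t\<in>{..<b-a}. X / real b)"
        by (rule sum.cong) (auto simp: \<delta>_def)
      also have "(\<Sum>t\<in>{b-a..<b}. \<delta> t) = (\<Sum>t\<in>{b-a..<b}. Y / real b)"
        by (rule sum.cong) (auto simp: \<delta>_def)
      finally show ?thesis .
    qed
    also have "\<dots> = ((real b - real a) * X + real a * Y) / real b"
      using a by (simp add: of_nat_diff add_divide_distrib)
    finally show ?thesis .
  qed
  ultimately show ?thesis using set_decomp[OF b a, of r d] unfolding S_def by simp
qed


lemma dens_UNIV: "dens UNIV 1"
  unfolding dens_def by (rule tendsto_by_bound[where C=0]) simp

lemma dens_empty: "dens {} 0"
  unfolding dens_def by simp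

lemma mu_eqI: "dens {n. Delta b r n = d} \<delta> \<Longrightarrow> mu b r d = \<delta>"
  unfolding mu_def dens_def mem_Collect_eq by (rule limI)

definition dgood :: "nat \<Rightarrow> nat \<Rightarrow> bool" where
  "dgood b r \<longleftrightarrow> (\<forall>d. dens {n. Delta b r n = d} (mu b r d))"

definition good :: "nat \<Rightarrow> nat \<Rightarrow> bool" where
  "good b r \<longleftrightarrow> dgood b r \<and> (mu b r has_sum 1) UNIV
     \<and> ((\<lambda>d. mu b r d * of_int d) has_sum 0) UNIV
     \<and> ((\<lambda>d. mu b r d * (of_int d)^2) summable_on UNIV)"

lemma has_sum_shift:
  fixes g :: "int \<Rightarrow> real"
  shows "((\<lambda>d. g (d - c)) has_sum s) UNIV \<longleftrightarrow> (g has_sum s) UNIV"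
proof -
  have "inj_on (\<lambda>d. d - c) UNIV" by (auto simp: inj_on_def)
  moreover have "(\<lambda>d::int. d - c) ` UNIV = UNIV"
  proof (rule set_eqI)
    fix x :: int show "x \<in> (\<lambda>d. d - c) ` UNIV \<longleftrightarrow> x \<in> UNIV"
      by (auto intro: range_eqI[of _ _ "x + c"])
  qed
  ultimately show ?thesis using has_sum_reindex[of "\<lambda>d. d - c" UNIV g s] by (simp add: o_def)
qed

lemma moments_shift:
  fixes F :: "int \<Rightarrow> real" and c :: int
  assumes h0: "(F has_sum t) UNIV" and h1: "((\<lambda>d. F d * of_int d) has_sum m) UNIV"
    and h2: "((\<lambda>d. F d * (of_int d)^2) has_sum s) UNIV"
  shows "((\<lambda>d. F (d - c)) has_sum t) UNIV"
    and "((\<lambda>d. F (d - c) * of_int d) has_sum (m + of_int c * t)) UNIV"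
    and "((\<lambda>d. F (d - c) * (of_int d)^2) has_sum (s + 2 * of_int c * m + (of_int c)^2 * t)) UNIV"
proof -
  show "((\<lambda>d. F (d - c)) has_sum t) UNIV" using h0 has_sum_shift[of F c t] by simp
  have "((\<lambda>e. F e * of_int e + of_int c * F e) has_sum (m + of_int c * t)) UNIV"
    by (intro has_sum_add h1 has_sum_cmult_right h0)
  then have "((\<lambda>e. F e * of_int (e + c)) has_sum (m + of_int c * t)) UNIV"
    by (simp add: algebra_simps)
  then show "((\<lambda>d. F (d - c) * of_int d) has_sum (m + of_int c * t)) UNIV"
    using has_sum_shift[of "\<lambda>e. F e * of_int (e + c)" c] by simp
  have "((\<lambda>e. F e * (of_int e)^2 + (2 * of_int c) * (F e * of_int e) + (of_int c)^2 * F e)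
     has_sum (s + 2 * of_int c * m + (of_int c)^2 * t)) UNIV"
    by (intro has_sum_add h1 h2 has_sum_cmult_right h0)
  then have "((\<lambda>e. F e * (of_int (e + c))^2) has_sum (s + 2 * of_int c * m + (of_int c)^2 * t)) UNIV"
    by (simp add: algebra_simps power2_eq_square)
  then show "((\<lambda>d. F (d - c) * (of_int d)^2) has_sum (s + 2 * of_int c * m + (of_int c)^2 * t)) UNIV"
    using has_sum_shift[of "\<lambda>e. F e * (of_int (e + c))^2" c] by simp
qed

lemma has_sum_mix:
  fixes f g h :: "int \<Rightarrow> real"
  assumes "(f has_sum x) A" "(g has_sum y) A" "\<And>d. h d = (p * f d + q * g d) / B"
    "z = (p * x + q * y) / B"
  shows "(h has_sum z) A"
proof -
  have "((\<lambda>d. (1/B) * (p * f d + q * g d)) has_sum ((1/B) * (p * x + q * y))) A"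
    by (intro has_sum_cmult_right has_sum_add assms(1,2))
  moreover have "h = (\<lambda>d. (1/B) * (p * f d + q * g d))" using assms(3) by (auto intro!: ext)
  ultimately show ?thesis by (simp add: assms(4))
qed

lemma mix_moments:
  fixes F0 F1 G :: "int \<Rightarrow> real" and c0 c1 :: int
  assumes a0: "(F0 has_sum t0) UNIV" "((\<lambda>d. F0 d * of_int d) has_sum m0) UNIV"
      "((\<lambda>d. F0 d * (of_int d)^2) has_sum s0) UNIV"
    and a1: "(F1 has_sum t1) UNIV" "((\<lambda>d. F1 d * of_int d) has_sum m1) UNIV"
      "((\<lambda>d. F1 d * (of_int d)^2) has_sum s1) UNIV"
    and G: "\<And>d. G d = (p * F0 (d - c0) + q * F1 (d - c1)) / B"
  shows "(G has_sum ((p * t0 + q * t1) / B)) UNIV"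
    and "((\<lambda>d. G d * of_int d) has_sum ((p * (m0 + of_int c0 * t0) + q * (m1 + of_int c1 * t1)) / B)) UNIV"
    and "((\<lambda>d. G d * (of_int d)^2) has_sum ((p * (s0 + 2 * of_int c0 * m0 + (of_int c0)^2 * t0)
          + q * (s1 + 2 * of_int c1 * m1 + (of_int c1)^2 * t1)) / B)) UNIV"
proof -
  note A = moments_shift[OF a0, of c0]
  note B = moments_shift[OF a1, of c1]
  show "(G has_sum ((p * t0 + q * t1) / B)) UNIV"
    by (rule has_sum_mix[OF A(1) B(1)]) (use G in auto)
  show "((\<lambda>d. G d * of_int d) has_sum ((p * (m0 + of_int c0 * t0) + q * (m1 + of_int c1 * t1)) / B)) UNIV"
    by (rule has_sum_mix[OF A(2) B(2)]) (auto simp: G field_simps)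
  show "((\<lambda>d. G d * (of_int d)^2) has_sum ((p * (s0 + 2 * of_int c0 * m0 + (of_int c0)^2 * t0)
          + q * (s1 + 2 * of_int c1 * m1 + (of_int c1)^2 * t1)) / B)) UNIV"
    by (rule has_sum_mix[OF A(3) B(3)]) (auto simp: G field_simps)
qed

lemma mu_step:
  assumes b: "b \<ge> 2" and a: "a < b" and g0: "dgood b r" and g1: "a > 0 \<Longrightarrow> dgood b (r+1)"
  shows "dgood b (b*r+a)"
    and "\<And>d. mu b (b*r+a) d = ((real b - real a) * mu b r (d - int a) + real a * mu b (r+1) (d - (int a - int b))) / real b"
proof -
  have D: "dens {n. Delta b (b*r+a) n = d}
     (((real b - real a) * mu b r (d - int a) + real a * mu b (r+1) (d - (int a - int b))) / real b)" for d
  proof -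
    have X: "dens {q. Delta b r q = d - int a} (mu b r (d - int a))" using g0 unfolding dgood_def by blast
    have e: "d - (int a - int b) = d - int a + int b" by simp
    have Y: "dens {q. Delta b (r+1) q = d - int a + int b} (mu b (r+1) (d - (int a - int b)))" if "a > 0"
      using g1[OF that] unfolding dgood_def e by blast
    show ?thesis by (rule dens_step[OF b a X Y])
  qed
  show "\<And>d. mu b (b*r+a) d = ((real b - real a) * mu b r (d - int a) + real a * mu b (r+1) (d - (int a - int b))) / real b"
    using D by (rule mu_eqI)
  then show "dgood b (b*r+a)" using D unfolding dgood_def by simp
qed

lemma good0:
  assumes b: "b \<ge> 2"
  shows "good b 0"
proof -
  have D: "Delta b 0 n = 0" for n by (simp add: Delta_def)
  have S: "{n. Delta b 0 n = d} = (if d = 0 then UNIV else {})" for d using D by auto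
  have dd: "dens {n. Delta b 0 n = d} (if d = 0 then 1 else 0)" for d
    unfolding S using dens_UNIV dens_empty by simp
  have mu: "mu b 0 d = (if d = 0 then 1 else 0)" for d by (rule mu_eqI[OF dd])
  have hs: "(f has_sum f 0) UNIV" if "\<And>d. d \<noteq> 0 \<Longrightarrow> f d = 0" for f :: "int \<Rightarrow> real"
  proof -
    have "(f has_sum f 0) {0}" by (rule has_sum_finiteI) auto
    moreover have "(f has_sum f 0) {0} \<longleftrightarrow> (f has_sum f 0) UNIV"
      by (rule has_sum_cong_neutral) (use that in auto)
    ultimately show ?thesis by simp
  qed
  have "(mu b 0 has_sum 1) UNIV" using hs[of "mu b 0"] by (simp add: mu)
  moreover have "((\<lambda>d. mu b 0 d * of_int d) has_sum 0) UNIV"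
    using hs[of "\<lambda>d. mu b 0 d * of_int d"] by (simp add: mu)
  moreover have "((\<lambda>d. mu b 0 d * (of_int d)^2) summable_on UNIV)"
    using hs[of "\<lambda>d. mu b 0 d * (of_int d)^2"] by (auto simp: mu summable_on_def)
  moreover have "dgood b 0" unfolding dgood_def using dd mu by simp
  ultimately show ?thesis unfolding good_def by simp
qed

lemma good_step0:
  assumes b: "b \<ge> 2" and g: "good b r"
  shows "good b (b*r)"
proof -
  have "dgood b r" using g unfolding good_def by simp
  note M = mu_step[OF b _ this, of 0]
  have e: "mu b (b*r) = mu b r" using M(2) b by (auto intro!: ext)
  have "dgood b (b*r)" using M(1) b by simp
  then show ?thesis using g unfolding good_def e by simp
qed

lemma good_step:
  assumes b: "b \<ge> 2" and a: "0 < a" "a < b" and g0: "good b r" and g1: "good b (r+1)"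
  shows "good b (b*r+a)"
proof -
  have d0: "dgood b r" and d1: "dgood b (r+1)" using g0 g1 unfolding good_def by auto
  note M = mu_step[OF b a(2) d0 d1]
  define s0 where "s0 = infsum (\<lambda>d. mu b r d * (of_int d)^2) UNIV"
  define s1 where "s1 = infsum (\<lambda>d. mu b (r+1) d * (of_int d)^2) UNIV"
  have h0: "((\<lambda>d. mu b r d * (of_int d)^2) has_sum s0) UNIV"
    using g0 unfolding good_def s0_def by auto
  have h1: "((\<lambda>d. mu b (r+1) d * (of_int d)^2) has_sum s1) UNIV"
    using g1 unfolding good_def s1_def by auto
  have t0: "(mu b r has_sum 1) UNIV" and m0: "((\<lambda>d. mu b r d * of_int d) has_sum 0) UNIV"
    using g0 unfolding good_def by auto
  have t1: "(mu b (r+1) has_sum 1) UNIV" and m1: "((\<lambda>d. mu b (r+1) d * of_int d) has_sum 0) UNIV"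
    using g1 unfolding good_def by auto
  note MM = mix_moments[OF t0 m0 h0 t1 m1 h1 M(2)]
  have v1: "((real b - real a) * 1 + real a * 1) / real b = 1" using b by simp
  have v2: "((real b - real a) * (0 + of_int (int a) * 1) + real a * (0 + of_int (int a - int b) * 1)) / real b = 0"
    by (simp add: algebra_simps)
  have "(mu b (b*r+a) has_sum 1) UNIV"
    using MM(1) unfolding v1 .
  moreover have "((\<lambda>d. mu b (b*r+a) d * of_int d) has_sum 0) UNIV"
    using MM(2) unfolding v2 .
  moreover have "((\<lambda>d. mu b (b*r+a) d * (of_int d)^2) summable_on UNIV)"
    using MM(3) unfolding summable_on_def by blast
  ultimately show ?thesis using M(1) unfolding good_def by simp
qed


lemma mu0: "mu b 0 d = (if d = 0 then 1 else 0)"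
proof -
  have D: "Delta b 0 n = 0" for n by (simp add: Delta_def)
  have S: "{n. Delta b 0 n = d} = (if d = 0 then UNIV else {})" using D by auto
  show ?thesis by (rule mu_eqI) (simp add: S dens_UNIV dens_empty)
qed

lemma Delta1_le:
  assumes b: "b \<ge> 2"
  shows "Delta b 1 n \<le> 1"
proof (induction n rule: less_induct)
  case (less n)
  define q t where "q = n div b" and "t = n mod b"
  have n: "n = b*q+t" unfolding q_def t_def by simp
  have t: "t < b" unfolding t_def using b by simp
  have one: "1 < b" using b by simp
  have E: "Delta b 1 n = (if t + 1 < b then Delta b 0 q + 1 else Delta b (0+1) q + 1 - int b)"
    using Delta_step[OF b t one, of 0 q] n by simp
  show ?case
  proof (cases "t + 1 < b")
    case True then show ?thesis using E by (simp add: Delta_def)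
  next
    case False
    then have "t \<ge> 1" using b by simp
    then have "q < n" using n b unfolding q_def by simp
    then have "Delta b 1 q \<le> 1" by (rule less.IH)
    then show ?thesis using E False b by simp
  qed
qed

lemma dens1_exists:
  assumes b: "b \<ge> 2"
  shows "\<exists>\<delta>. dens {n. Delta b 1 n = d} \<delta>"
proof (induction "nat (1 - d)" arbitrary: d rule: less_induct)
  case less
  have one: "1 < b" using b by simp
  show ?case
  proof (cases "d > 1")
    case True
    have "Delta b 1 n \<noteq> d" for n using Delta1_le[OF b, of n] True by simp
    then have "{n. Delta b 1 n = d} = {}" by auto
    then show ?thesis using dens_empty by auto
  next
    case False
    have X: "dens {q. Delta b 0 q = d - int 1} (mu b 0 (d - int 1))"
      using good0[OF b] unfolding good_def dgood_def by blast
    obtain Y where Y: "dens {q. Delta b (0+1) q = d - int 1 + int b} Y"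
    proof (cases "d - 1 + int b > 1")
      case True
      have "Delta b 1 n \<noteq> d - int 1 + int b" for n using Delta1_le[OF b, of n] True by simp
      then have "{q. Delta b (0+1) q = d - int 1 + int b} = {}" by auto
      then show ?thesis using that dens_empty by auto
    next
      case False
      then have "nat (1 - (d - int 1 + int b)) < nat (1 - d)" using b \<open>\<not> d > 1\<close> by simp
      then obtain Y' where "dens {n. Delta b 1 n = d - int 1 + int b} Y'" using less(1) by blast
      then show ?thesis using that by simp
    qed
    show ?thesis using dens_step[OF b one X Y] by auto
  qed
qed

lemma dgood1:
  assumes b: "b \<ge> 2"
  shows "dgood b 1"
  unfolding dgood_def
proof
  fix d
  obtain \<delta> where D: "dens {n. Delta b 1 n = d} \<delta>" using dens1_exists[OF b] by blast
  then show "dens {n. Delta b 1 n = d} (mu b 1 d)" using mu_eqI[OF D] by simp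
qed

lemma mu1_rec:
  assumes b: "b \<ge> 2"
  shows "mu b 1 d = ((real b - 1) * mu b 0 (d - 1) + 1 * mu b 1 (d - (1 - int b))) / real b"
proof -
  have one: "1 < b" using b by simp
  have "dgood b 0" using good0[OF b] unfolding good_def by simp
  note M = mu_step(2)[OF b one this, of d] dgood1[OF b]
  then show ?thesis by simp
qed

lemma mu1_big:
  assumes b: "b \<ge> 2" and d: "d > 1"
  shows "mu b 1 d = 0"
proof -
  have "Delta b 1 n \<noteq> d" for n using Delta1_le[OF b, of n] d by simp
  then have "{n. Delta b 1 n = d} = {}" by auto
  then show ?thesis using mu_eqI[of b 1 d 0] dens_empty by simp
qed

lemma mu1_val:
  assumes b: "b \<ge> 2"
  shows "mu b 1 (1 - (int b - 1) * int j) = (real b - 1) / real b ^ (j+1)"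
proof (induction j)
  case 0
  have "mu b 1 1 = ((real b - 1) * 1 + 1 * mu b 1 (int b)) / real b"
    using mu1_rec[OF b, of 1] by (simp add: mu0)
  moreover have "mu b 1 (int b) = 0" using mu1_big[OF b] b by simp
  ultimately show ?case by simp
next
  case (Suc j)
  define d where "d = 1 - (int b - 1) * int (Suc j)"
  have "d \<noteq> 1" unfolding d_def using b by simp
  have e: "d - (1 - int b) = 1 - (int b - 1) * int j" unfolding d_def by (simp add: algebra_simps)
  have "mu b 1 d = mu b 1 (d - (1 - int b)) / real b"
    using mu1_rec[OF b, of d] \<open>d \<noteq> 1\<close> by (simp add: mu0)
  also have "\<dots> = (real b - 1) / real b ^ (Suc j + 1)" unfolding e Suc by simp
  finally show ?case unfolding d_def .
qed

lemma mu1_zero: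
  assumes b: "b \<ge> 2" and d: "d \<notin> range (\<lambda>j. 1 - (int b - 1) * int j)"
  shows "mu b 1 d = 0"
  using d
proof (induction "nat (1 - d)" arbitrary: d rule: less_induct)
  case less
  show ?case
  proof (cases "d > 1")
    case True then show ?thesis using mu1_big[OF b] by simp
  next
    case False
    have "d \<noteq> 1" using less.prems by (metis (no_types, lifting) mult_zero_right of_nat_0 diff_zero rangeI)
    have nr: "d - (1 - int b) \<notin> range (\<lambda>j. 1 - (int b - 1) * int j)"
    proof
      assume "d - (1 - int b) \<in> range (\<lambda>j. 1 - (int b - 1) * int j)"
      then obtain j where "d - (1 - int b) = 1 - (int b - 1) * int j" by blast
      then have "d = (\<lambda>j. 1 - (int b - 1) * int j) (Suc j)" by (simp add: algebra_simps)
      then show False using less.prems by (metis rangeI)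
    qed
    have "mu b 1 d = mu b 1 (d - (1 - int b)) / real b"
      using mu1_rec[OF b, of d] \<open>d \<noteq> 1\<close> by (simp add: mu0)
    also have "mu b 1 (d - (1 - int b)) = 0"
    proof (cases "d - (1 - int b) > 1")
      case True then show ?thesis using mu1_big[OF b] by simp
    next
      case F: False
      have "nat (1 - (d - (1 - int b))) < nat (1 - d)" using b F False by simp
      then show ?thesis using less.hyps nr by blast
    qed
    finally show ?thesis by simp
  qed
qed


lemma ratio_summable: "summable (\<lambda>j::nat. (real j + 1)^2 * (1/2)^j)"
proof (rule summable_ratio_test[where c="8/9" and N=2])
  fix n :: nat assume n: "n \<ge> 2"
  have "3 * (real n + 2) \<le> 4 * (real n + 1)" using n by simp
  then have "(3 * (real n + 2))^2 \<le> (4 * (real n + 1))^2" by (intro power_mono) auto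
  moreover have "(3 * (real n + 2))^2 = 9 * (real n + 2)^2" "(4 * (real n + 1))^2 = 16 * (real n + 1)^2"
    by (simp_all add: power2_eq_square algebra_simps)
  ultimately have h: "9 * (real n + 2)^2 \<le> 16 * (real n + 1)^2" by metis
  have p: "(1/2::real)^n > 0" by simp
  have "(real n + 2)^2 * (1/2) \<le> 8/9 * (real n + 1)^2" using h by simp
  then have "(real n + 2)^2 * (1/2) * (1/2)^n \<le> 8/9 * (real n + 1)^2 * (1/2)^n"
    using p by (intro mult_right_mono) auto
  then show "norm ((real (Suc n) + 1)^2 * (1/2)^(Suc n)) \<le> 8/9 * norm ((real n + 1)^2 * (1/2::real)^n)"
    by (simp add: add.commute mult.assoc mult.left_commute)
qed simp

lemma mu1_nonneg:
  assumes b: "b \<ge> 2"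
  shows "mu b 1 d \<ge> 0"
proof (cases "d \<in> range (\<lambda>j. 1 - (int b - 1) * int j)")
  case True
  then obtain j where "d = 1 - (int b - 1) * int j" by blast
  then show ?thesis using mu1_val[OF b, of j] b by simp
next
  case False then show ?thesis using mu1_zero[OF b] by simp
qed

lemma mu1_summable:
  assumes b: "b \<ge> 2"
  shows "(\<lambda>d. mu b 1 d * (1 + (of_int d)^2)) summable_on UNIV"
proof -
  define \<phi> where "\<phi> j = 1 - (int b - 1) * int j" for j
  define w where "w d = mu b 1 d * (1 + (of_int d)^2)" for d
  define B where "B = real b"
  have B: "B \<ge> 2" unfolding B_def using b by simp
  have inj: "inj \<phi>" unfolding \<phi>_def inj_def using b by auto
  have u: "(w \<circ> \<phi>) j = (B - 1) / B ^ (j+1) * (1 + (1 - (B - 1) * real j)^2)" for j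
    unfolding w_def \<phi>_def B_def o_def using mu1_val[OF b, of j] by simp
  have wnn: "0 \<le> (w \<circ> \<phi>) j" for j
  proof -
    have nn: "0 \<le> (B - 1) / B ^ (j+1)" using B by simp
    show ?thesis unfolding u by (rule mult_nonneg_nonneg[OF nn]) simp
  qed
  have bound: "norm ((w \<circ> \<phi>) j) \<le> 2 * (B-1)^2 * ((real j + 1)^2 * (1/2)^j)" for j
  proof -
    have p1: "(B - 1) / B ^ (j+1) \<le> (1/2)^j"
    proof -
      have "(B - 1) / B ^ (j+1) \<le> B / B^(j+1)" using B by (intro divide_right_mono) auto
      also have "\<dots> = 1 / B^j" using B by simp
      also have "\<dots> \<le> 1 / 2^j" using B by (intro divide_left_mono power_mono) auto
      finally show ?thesis by (simp add: power_one_over)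
    qed
    have y0: "0 \<le> (B-1) * real j" using B by simp
    have ex: "(B-1) * (real j + 1) = (B-1) * real j + (B-1)" by (simp add: algebra_simps)
    have q1: "\<bar>1 - (B - 1) * real j\<bar> \<le> (B-1) * (real j + 1)"
      unfolding ex abs_le_iff using y0 B by linarith
    have "\<bar>1 - (B - 1) * real j\<bar>^2 \<le> ((B-1) * (real j + 1))^2"
      by (rule power_mono[OF q1]) simp
    then have q2: "(1 - (B - 1) * real j)^2 \<le> ((B-1) * (real j + 1))^2" by simp
    have c1: "1 * 1 \<le> (B-1) * (real j + 1)" by (rule mult_mono) (use B in auto)
    have "1 ^ 2 \<le> ((B-1) * (real j + 1))^2" by (rule power_mono) (use c1 in auto)
    then have q3: "1 \<le> ((B-1) * (real j + 1))^2" by simp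
    have p2: "1 + (1 - (B - 1) * real j)^2 \<le> 2 * ((B-1)^2 * (real j + 1)^2)"
      using q2 q3 by (simp add: power_mult_distrib)
    have nn: "0 \<le> (B - 1) / B ^ (j+1)" using B by simp
    have "(w \<circ> \<phi>) j \<le> (1/2)^j * (2 * ((B-1)^2 * (real j + 1)^2))"
      unfolding u by (rule mult_mono[OF p1 p2]) simp_all
    moreover have "(w \<circ> \<phi>) j \<ge> 0" unfolding u by (rule mult_nonneg_nonneg[OF nn]) simp
    ultimately show ?thesis by (simp add: algebra_simps)
  qed
  have "summable (w \<circ> \<phi>)"
    by (rule summable_comparison_test'[OF summable_mult[OF ratio_summable] bound])
  then have "(w \<circ> \<phi>) summable_on UNIV"
    by (subst summable_on_UNIV_nonneg_real_iff) (use wnn in auto)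
  then have "w summable_on range \<phi>" using summable_on_reindex[OF inj, of w] by blast
  moreover have "w summable_on range \<phi> \<longleftrightarrow> w summable_on UNIV"
    by (rule summable_on_cong_neutral) (use mu1_zero[OF b] in \<open>auto simp: w_def \<phi>_def\<close>)
  ultimately show ?thesis unfolding w_def by simp
qed

lemma dom_summable:
  fixes f w :: "int \<Rightarrow> real"
  assumes "w summable_on UNIV" "\<And>d. \<bar>f d\<bar> \<le> w d"
  shows "f summable_on UNIV"
proof -
  have "(\<lambda>d. norm (f d)) summable_on UNIV"
    by (rule summable_on_comparison_test[OF assms(1)]) (use assms(2) in auto)
  then show ?thesis using summable_on_iff_abs_summable_on_real by blast
qed

lemma good1:
  assumes b: "b \<ge> 2"
  shows "good b 1"
proof -
  note W = mu1_summable[OF b]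
  have nn: "mu b 1 d \<ge> 0" for d by (rule mu1_nonneg[OF b])
  have x1: "\<bar>x\<bar> \<le> 1 + x^2" for x :: real
  proof -
    have "0 \<le> (\<bar>x\<bar> - 1)^2" by simp
    then have "2 * \<bar>x\<bar> \<le> x^2 + 1" by (simp add: power2_diff)
    moreover have "0 \<le> x^2" by simp
    ultimately show ?thesis by linarith
  qed
  have S0: "mu b 1 summable_on UNIV"
  proof (rule dom_summable[OF W])
    fix d
    have "mu b 1 d * 1 \<le> mu b 1 d * (1 + (of_int d)^2)" by (rule mult_left_mono) (use nn in auto)
    then show "\<bar>mu b 1 d\<bar> \<le> mu b 1 d * (1 + (of_int d)^2)" using nn[of d] by simp
  qed
  have S1: "(\<lambda>d. mu b 1 d * of_int d) summable_on UNIV"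
  proof (rule dom_summable[OF W])
    fix d show "\<bar>mu b 1 d * of_int d\<bar> \<le> mu b 1 d * (1 + (of_int d)^2)"
      using nn[of d] x1[of "of_int d"] by (simp add: abs_mult mult_left_mono)
  qed
  have S2: "(\<lambda>d. mu b 1 d * (of_int d)^2) summable_on UNIV"
    by (rule dom_summable[OF W]) (use nn in \<open>auto simp: abs_mult mult_left_mono\<close>)
  define t1 m1 s1 where "t1 = infsum (mu b 1) UNIV" and "m1 = infsum (\<lambda>d. mu b 1 d * of_int d) UNIV"
    and "s1 = infsum (\<lambda>d. mu b 1 d * (of_int d)^2) UNIV"
  have h0: "(mu b 1 has_sum t1) UNIV" "((\<lambda>d. mu b 1 d * of_int d) has_sum m1) UNIV"
    "((\<lambda>d. mu b 1 d * (of_int d)^2) has_sum s1) UNIV"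
    using S0 S1 S2 unfolding t1_def m1_def s1_def by auto
  have g0: "good b 0" by (rule good0[OF b])
  define s0 where "s0 = infsum (\<lambda>d. mu b 0 d * (of_int d)^2) UNIV"
  have z: "(mu b 0 has_sum 1) UNIV" "((\<lambda>d. mu b 0 d * of_int d) has_sum 0) UNIV"
    "((\<lambda>d. mu b 0 d * (of_int d)^2) has_sum s0) UNIV"
    using g0 unfolding good_def s0_def by auto
  have rec: "mu b 1 d = ((real b - 1) * mu b 0 (d - 1) + 1 * mu b 1 (d - (1 - int b))) / real b" for d
    by (rule mu1_rec[OF b])
  note MM = mix_moments[OF z h0 rec]
  have "t1 = ((real b - 1) * 1 + 1 * t1) / real b" using has_sum_unique[OF MM(1) h0(1)] by simp
  then have e: "1 + t1 * real b = t1 + real b" using b by (simp add: field_simps)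
  have "(t1 - 1) * (real b - 1) = 0" using e by (simp add: algebra_simps)
  then have t: "t1 = 1" using b by simp
  have "m1 = ((real b - 1) * (0 + of_int 1 * 1) + 1 * (m1 + of_int (1 - int b) * t1)) / real b"
    using has_sum_unique[OF MM(2) h0(2)] by simp
  then have e2: "m1 * real b = m1" using b t by (simp add: field_simps)
  have "m1 * (real b - 1) = 0" using e2 by (simp add: algebra_simps)
  then have m: "m1 = 0" using b by simp
  show ?thesis unfolding good_def using dgood1[OF b] h0 t m S2 by simp
qed


lemma good_all:
  assumes b: "b \<ge> 2"
  shows "good b R"
proof (induction R rule: less_induct)
  case (less R)
  consider "R = 0" | "R = 1" | "R \<ge> 2" by linarith
  then show ?case
  proof cases
    case 1 then show ?thesis using good0[OF b] by simp
  next
    case 2 then show ?thesis using good1[OF b] by simp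
  next
    case 3
    define r a where "r = R div b" and "a = R mod b"
    have R: "R = b*r+a" unfolding r_def a_def by simp
    have a: "a < b" unfolding a_def using b by simp
    have rl: "r < R" unfolding r_def using b 3 by simp
    show ?thesis
    proof (cases "a = 0")
      case True
      then show ?thesis using good_step0[OF b less[OF rl]] R by simp
    next
      case False
      have r1: "r + 1 < R"
      proof (cases "r = 0")
        case True then show ?thesis using R 3 by simp
      next
        case F: False
        have "b*r \<ge> 2*r" using b by simp
        then show ?thesis using R F False by linarith
      qed
      show ?thesis using good_step[OF b _ a less[OF rl] less[OF r1]] False R by simp
    qed
  qed
qed

definition S :: "nat \<Rightarrow> nat \<Rightarrow> real" where
  "S b R = infsum (\<lambda>d. mu b R d * (of_int d)^2) UNIV"

lemma Var_S:
  assumes b: "b \<ge> 2"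
  shows "Var_mu b R = S b R"
proof -
  have "((\<lambda>d. mu b R d * of_int d) has_sum 0) UNIV" using good_all[OF b] unfolding good_def by simp
  then have "infsum (\<lambda>d. mu b R d * of_int d) UNIV = 0" by (rule infsumI)
  then show ?thesis unfolding Var_mu_def S_def by simp
qed

lemma S_mult:
  assumes b: "b \<ge> 2"
  shows "S b (b*r) = S b r"
proof -
  have "dgood b r" using good_all[OF b] unfolding good_def by simp
  note M = mu_step[OF b _ this, of 0]
  have e: "mu b (b*r) = mu b r" using M(2) b by (auto intro!: ext)
  then show ?thesis unfolding S_def by simp
qed

lemma S_pow:
  assumes b: "b \<ge> 2"
  shows "S b (b^k*r) = S b r"
  by (induction k) (auto simp: S_mult[OF b, of "b^_ * r", symmetric] mult.assoc)

lemma S_step1: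
  assumes b: "b \<ge> 2"
  shows "S b (b*r+1) = ((real b - 1) * (S b r + 1) + S b (r+1) + (real b - 1)^2) / real b"
proof -
  have g0: "good b r" and g1: "good b (r+1)" using good_all[OF b] by auto
  have d0: "dgood b r" and d1: "dgood b (r+1)" using g0 g1 unfolding good_def by auto
  have one: "1 < b" using b by simp
  note M = mu_step[OF b one d0 d1]
  have h0: "((\<lambda>d. mu b r d * (of_int d)^2) has_sum S b r) UNIV"
    using g0 unfolding good_def S_def by auto
  have h1: "((\<lambda>d. mu b (r+1) d * (of_int d)^2) has_sum S b (r+1)) UNIV"
    using g1 unfolding good_def S_def by auto
  have t0: "(mu b r has_sum 1) UNIV" and m0: "((\<lambda>d. mu b r d * of_int d) has_sum 0) UNIV"
    using g0 unfolding good_def by auto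
  have t1: "(mu b (r+1) has_sum 1) UNIV" and m1: "((\<lambda>d. mu b (r+1) d * of_int d) has_sum 0) UNIV"
    using g1 unfolding good_def by auto
  note MM = mix_moments[OF t0 m0 h0 t1 m1 h1 M(2)]
  have "S b (b*r+1) = ((real b - real 1) * (S b r + 2 * of_int (int 1) * 0 + (of_int (int 1))^2 * 1)
     + real 1 * (S b (r+1) + 2 * of_int (int 1 - int b) * 0 + (of_int (int 1 - int b))^2 * 1)) / real b"
    using infsumI[OF MM(3)] by (simp only: S_def[of b "b*r+1"])
  also have "\<dots> = ((real b - 1) * (S b r + 1) + S b (r+1) + (real b - 1)^2) / real b"
    by (simp add: power2_eq_square algebra_simps)
  finally show ?thesis .
qed

lemma S_main:
  assumes b: "b \<ge> 2"
  shows "S b (b^(k+1)*r+1) = (1 - 1 / real b ^ (k+1)) * S b r + (1 / real b ^ (k+1)) * S b (r+1)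
      + real b - 1 / real b ^ k"
proof (induction k)
  case 0
  have bp: "real b > 0" using b by simp
  show ?case using S_step1[OF b, of r] bp by (simp add: field_simps power2_eq_square)
next
  case (Suc k)
  have bp: "real b > 0" using b by simp
  have e: "b^(Suc k+1)*r+1 = b*(b^(k+1)*r)+1" by (simp add: mult.assoc)
  have "S b (b^(Suc k+1)*r+1) = ((real b - 1) * (S b r + 1) + S b (b^(k+1)*r+1) + (real b - 1)^2) / real b"
    unfolding e S_step1[OF b] S_pow[OF b] by simp
  also have "\<dots> = (1 - 1 / real b ^ (Suc k+1)) * S b r + (1 / real b ^ (Suc k+1)) * S b (r+1)
      + real b - 1 / real b ^ Suc k"
    unfolding Suc using bp by (simp add: field_simps power2_eq_square)
  finally show ?case .
qed

theorem mainTheorem13: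
  fixes b r m :: nat
  assumes "b \<ge> 2" and "m \<ge> 1"
  shows "Var_mu b (b ^ m * r + 1)
    = (1 - 1 / real b ^ m) * Var_mu b r + (1 / real b ^ m) * Var_mu b (r + 1)
      + real b - 1 / real b ^ (m - 1)"
proof -
  obtain k where m: "m = k + 1" using assms(2) by (metis add.commute le_add_diff_inverse)
  show ?thesis unfolding Var_S[OF assms(1)] m using S_main[OF assms(1), of k r] by simp
qed

end
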